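(* Let $p\ge1$, $T>0$, $\delta_n=2^{-n}$, and let $S\in C^0([0,T],\mathbb R)$ with $S_0=0$ have a continuous local time $L^{\pi,p}$ of order $p$ along the sequence $\pi=(\pi_n)$ of Lebesgue partitions defined below, with $L^{\pi,p}_t(S,0)>0$ for $t\in(0,T]$. Then for every $t\in(0,T]$, as $n\to\infty$: (i) if $1\le p<2$, $\delta_n D^{\delta_n}_t(S)\to0$; (ii) if $p>2$, $\delta_nD^{\delta_n}_t(S)\to\infty$ and $D^{\delta_n}_t(S)\sim L^{\pi,p}_t(S,0)/\delta_n^{p-1}$; (iii) if $p=2$, $\delta_nD^{\delta_n}_t(S)\to L^{\pi,2}_t(S,0)$, i.e. $D^{\delta_n}_t(S)\sim L^{\pi,2}_t(S,0)/\delta_n$.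
   Context: Lebesgue partitions: $\pi_n=\{t^n_k\}$ with $t^n_0=0$, $t^n_{k+1}=\inf\{t\ge t^n_k: S_t\in\delta_n\mathbb Z\setminus\{S_{t^n_k}\}\}$. For $a,b\in\mathbb R$ write $[\![a,b))=[a,b)$ if $a\le b$ and $[b,a)$ if $a>b$. Set $L^{\pi_n,p}_t(S,x)=\sum_{t^n_j\in\pi_n}1_{[\![S_{t^n_j\wedge t},S_{t^n_{j+1}\wedge t}))}(x)\,|S_{t^n_{j+1}\wedge t}-x|^{p-1}$. $S$ has a continuous local time of order $p$ along $\pi$ if $L^{\pi_n,p}_t(S,x)$ converges, uniformly in $(t,x)\in[0,T]\times\mathbb R$, to a limit $L^{\pi,p}_t(S,x)$ and $(t,x)\mapsto L^{\pi,p}_t(S,x)$ is continuous. Number of $\delta$-excursions: with $\theta^+_0=\tau^+_0=0$, $\tau^+_i=\inf\{u>\theta^+_{i-1}:S_u=\delta\}$, $\theta^+_i=\inf\{u>\tau^+_i:S_u=0\}$, set $D^\delta_t(S)=\sum_{i\ge1}1_{\{\theta^+_i\le t\}}$. *)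

theory Defs
  imports "HOL-Analysis.Analysis" "HOL-Library.Landau_Symbols"
begin

definition dyad :: "nat \<Rightarrow> real" where
  "dyad n = inverse (2 ^ n)"

definition on_grid :: "real \<Rightarrow> real \<Rightarrow> bool" where
  "on_grid \<delta> y \<longleftrightarrow> (\<exists>m::int. y = \<delta> * of_int m)"

text \<open>Convention: the infimum of the empty set is +infinity, encoded by the value T+1
  (any value > T; all later points are then also T+1 and contribute nothing).\<close>
fun leb_pt :: "(real \<Rightarrow> real) \<Rightarrow> real \<Rightarrow> real \<Rightarrow> nat \<Rightarrow> real" where
  "leb_pt S T \<delta> 0 = 0"
| "leb_pt S T \<delta> (Suc k) =
     (let a = leb_pt S T \<delta> k;
          A = {t. a \<le> t \<and> t \<le> T \<and> on_grid \<delta> (S t) \<and> S t \<noteq> S a}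
      in if A = {} then T + 1 else Inf A)"

definition oint :: "real \<Rightarrow> real \<Rightarrow> real set" where
  "oint a b = (if a \<le> b then {a..<b} else {b..<a})"

text \<open>Power with the convention y^0 = 1 (also for y = 0), unlike powr.\<close>
definition rpow :: "real \<Rightarrow> real \<Rightarrow> real" where
  "rpow y e = (if e = 0 then 1 else y powr e)"

definition disc_lt :: "(real \<Rightarrow> real) \<Rightarrow> real \<Rightarrow> real \<Rightarrow> real \<Rightarrow> real \<Rightarrow> real \<Rightarrow> real" where
  "disc_lt S T \<delta> p t x =
     (\<Sum>j. indicator (oint (S (min (leb_pt S T \<delta> j) t)) (S (min (leb_pt S T \<delta> (Suc j)) t))) x
          * rpow \<bar>S (min (leb_pt S T \<delta> (Suc j)) t) - x\<bar> (p - 1))"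

text \<open>First time strictly after a (within [0,T]) at which P holds; T+1 encodes +infinity.\<close>
definition hit :: "real \<Rightarrow> (real \<Rightarrow> bool) \<Rightarrow> real \<Rightarrow> real" where
  "hit T P a = (let A = {u. a < u \<and> u \<le> T \<and> P u} in if A = {} then T + 1 else Inf A)"

fun exc :: "(real \<Rightarrow> real) \<Rightarrow> real \<Rightarrow> real \<Rightarrow> nat \<Rightarrow> real \<times> real" where
  "exc S T \<delta> 0 = (0, 0)"
| "exc S T \<delta> (Suc i) =
     (let \<tau> = hit T (\<lambda>u. S u = \<delta>) (snd (exc S T \<delta> i))
      in (\<tau>, hit T (\<lambda>u. S u = 0) \<tau>))"

definition num_exc :: "(real \<Rightarrow> real) \<Rightarrow> real \<Rightarrow> real \<Rightarrow> real \<Rightarrow> nat" where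
  "num_exc S T \<delta> t = card {i. 1 \<le> i \<and> snd (exc S T \<delta> i) \<le> t}"

end

theory Submission
  imports Defs
begin


lemma grid_eq:
  assumes "(\<delta>::real) > 0" "on_grid \<delta> y" "on_grid \<delta> z" "\<bar>y - z\<bar> < \<delta>"
  shows "y = z"
proof -
  obtain m n :: int where m: "y = \<delta> * m" and n: "z = \<delta> * n" using assms unfolding on_grid_def by blast
  have "\<bar>\<delta> * (of_int m - of_int n)\<bar> < \<delta>" using assms(4) m n by (simp add: algebra_simps)
  hence "\<delta> * \<bar>of_int m - of_int n\<bar> < \<delta> * 1" using assms(1) by (simp add: abs_mult)
  hence "\<bar>of_int m - of_int n\<bar> < (1::real)" using assms(1) by (simp only: mult_less_cancel_left_pos)
  hence "\<bar>m - n\<bar> < 1" by linarith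
  hence "m = n" by linarith
  thus ?thesis using m n by simp
qed

lemma grid_0[simp]: "on_grid \<delta> 0" unfolding on_grid_def by (rule exI[of _ 0]) simp
lemma grid_d[simp]: "on_grid \<delta> \<delta>" unfolding on_grid_def by (rule exI[of _ 1]) simp
lemma grid_plus: "on_grid \<delta> y \<Longrightarrow> on_grid \<delta> (y + \<delta>)"
  unfolding on_grid_def by (metis (no_types, opaque_lifting) mult.right_neutral of_int_add of_int_1 distrib_left)
lemma grid_minus: "on_grid \<delta> y \<Longrightarrow> on_grid \<delta> (y - \<delta>)"
  unfolding on_grid_def by (metis (no_types, opaque_lifting) mult.right_neutral of_int_diff of_int_1 right_diff_distrib)


lemma hit_le: "a < u \<Longrightarrow> u \<le> T \<Longrightarrow> P u \<Longrightarrow> hit T P a \<le> u"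
  unfolding hit_def Let_def
  by (auto intro!: cInf_lower bdd_belowI[of _ a])

lemma hit_ge: "T \<le> a \<Longrightarrow> hit T P a = T + 1"
  unfolding hit_def Let_def by auto

lemma hit_cases: "hit T P a = T + 1 \<or> (hit T P a \<le> T \<and> a \<le> hit T P a)"
proof (cases "{u. a < u \<and> u \<le> T \<and> P u} = {}")
  case True thus ?thesis unfolding hit_def Let_def by auto
next
  case False
  hence "Inf {u. a < u \<and> u \<le> T \<and> P u} \<le> T" "a \<le> Inf {u. a < u \<and> u \<le> T \<and> P u}"
    using False by (auto intro!: cInf_greatest bdd_belowI[of _ a] cInf_le_iff[THEN iffD2])
  thus ?thesis unfolding hit_def Let_def using False by auto
qed

declare leb_pt.simps(2)[simp del] exc.simps(2)[simp del]

locale lp =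
  fixes S :: "real \<Rightarrow> real" and T \<delta> :: real
  assumes cont: "continuous_on {0..T} S" and T0: "T > 0" and d0: "\<delta> > 0" and S0: "S 0 = 0"
begin

lemma step:
  assumes a0: "0 \<le> a" and aT: "a \<le> T" and ga: "on_grid \<delta> (S a)"
  defines "A \<equiv> {t. a \<le> t \<and> t \<le> T \<and> on_grid \<delta> (S t) \<and> S t \<noteq> S a}"
  shows "(A = {} \<and> (\<forall>u. a \<le> u \<and> u \<le> T \<longrightarrow> \<bar>S u - S a\<bar> < \<delta>))
       \<or> (A \<noteq> {} \<and> a < Inf A \<and> Inf A \<le> T \<and> \<bar>S (Inf A) - S a\<bar> = \<delta> \<and> on_grid \<delta> (S (Inf A))
           \<and> (\<forall>u. a \<le> u \<and> u < Inf A \<longrightarrow> \<bar>S u - S a\<bar> < \<delta>))"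
proof -
  define c where "c = S a"
  define B where "B = {a..T} \<inter> (\<lambda>u. \<bar>S u - c\<bar>) -` {\<delta>..}"
  have contA: "continuous_on {a..T} S" using a0 by (intro continuous_on_subset[OF cont]) auto
  have AB: "A \<subseteq> B"
  proof
    fix u assume "u \<in> A"
    hence u: "a \<le> u" "u \<le> T" "on_grid \<delta> (S u)" "S u \<noteq> c" unfolding A_def c_def by auto
    have "\<not> \<bar>S u - c\<bar> < \<delta>" using grid_eq[OF d0 u(3) ga[folded c_def]] u(4) by blast
    thus "u \<in> B" using u unfolding B_def by auto
  qed
  show ?thesis
  proof (cases "B = {}")
    case True
    hence "A = {}" using AB by auto
    moreover have "\<forall>u. a \<le> u \<and> u \<le> T \<longrightarrow> \<bar>S u - S a\<bar> < \<delta>"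
      using True unfolding B_def c_def by (auto simp: not_le)
    ultimately show ?thesis by blast
  next
    case False
    have clB: "closed B" unfolding B_def
      by (rule continuous_closed_preimage) (auto intro!: continuous_intros contA)
    have bdd: "bdd_below B" unfolding B_def by (rule bdd_belowI[of _ a]) auto
    define s where "s = Inf B"
    have sB: "s \<in> B" unfolding s_def using closed_contains_Inf[OF False bdd clB] .
    have smin: "\<And>u. u \<in> B \<Longrightarrow> s \<le> u" unfolding s_def using bdd by (simp add: cInf_lower)
    have s1: "a \<le> s" "s \<le> T" "\<delta> \<le> \<bar>S s - c\<bar>" using sB unfolding B_def by auto
    have "s \<noteq> a" using s1(3) d0 unfolding c_def by auto
    hence as: "a < s" using s1 by auto
    have below: "\<forall>u. a \<le> u \<and> u < s \<longrightarrow> \<bar>S u - c\<bar> < \<delta>"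
    proof (intro allI impI)
      fix u assume "a \<le> u \<and> u < s"
      hence "u \<notin> B" using smin by force
      thus "\<bar>S u - c\<bar> < \<delta>" using \<open>a \<le> u \<and> u < s\<close> s1 unfolding B_def by auto
    qed
    have contS: "continuous_on {a..s} S" using s1 by (intro continuous_on_subset[OF contA]) auto
    have eq: "\<bar>S s - c\<bar> = \<delta>"
    proof (rule ccontr)
      assume ne: "\<bar>S s - c\<bar> \<noteq> \<delta>"
      show False
      proof (cases "S s - c > 0")
        case True
        hence "S a \<le> c + \<delta>" "c + \<delta> \<le> S s" using ne s1(3) d0 unfolding c_def by auto
        then obtain x where x: "a \<le> x" "x \<le> s" "S x = c + \<delta>" using IVT'[OF _ _ _ contS] as by fastforce
        have "x \<in> B" using x s1 d0 unfolding B_def by auto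
        hence "x = s" using smin x by force
        thus False using x ne d0 by auto
      next
        case False
        hence "S s \<le> c - \<delta>" "c - \<delta> \<le> S a" using ne s1(3) d0 unfolding c_def by auto
        then obtain x where x: "a \<le> x" "x \<le> s" "S x = c - \<delta>" using IVT2'[OF _ _ _ contS] as by fastforce
        have "x \<in> B" using x s1 d0 unfolding B_def by auto
        hence "x = s" using smin x by force
        thus False using x ne d0 by auto
      qed
    qed
    have gs: "on_grid \<delta> (S s)"
    proof (cases "S s - c \<ge> 0")
      case True thus ?thesis using eq grid_plus[OF ga] unfolding c_def by (smt (verit))
    next
      case False thus ?thesis using eq grid_minus[OF ga] unfolding c_def by (smt (verit))
    qed
    have sA: "s \<in> A" unfolding A_def using s1 gs eq d0 unfolding c_def by auto
    have "Inf A = s" by (rule cInf_eq_minimum[OF sA]) (use AB smin in auto)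
    thus ?thesis using sA as s1 eq gs below unfolding c_def by auto
  qed
qed

abbreviation pt where "pt k \<equiv> leb_pt S T \<delta> k"

lemma pt_cases: "(pt k \<le> T \<and> 0 \<le> pt k \<and> on_grid \<delta> (S (pt k))) \<or> pt k = T + 1"
proof (induction k)
  case 0 thus ?case using T0 S0 by simp
next
  case (Suc k)
  show ?case
  proof (cases "pt k = T + 1")
    case True
    have "{t. T + 1 \<le> t \<and> t \<le> T \<and> on_grid \<delta> (S t) \<and> S t \<noteq> S (T+1)} = {}" by auto
    thus ?thesis using True by (simp add: leb_pt.simps(2) Let_def)
  next
    case False
    hence h: "0 \<le> pt k" "pt k \<le> T" "on_grid \<delta> (S (pt k))" using Suc by auto
    from step[OF h] h(1) show ?thesis by (auto simp add: leb_pt.simps(2) Let_def intro: order.trans[of 0 "pt k"])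
  qed
qed

lemma pt_next:
  assumes "pt k \<le> T"
  shows "(pt (Suc k) = T+1 \<and> (\<forall>u. pt k \<le> u \<and> u \<le> T \<longrightarrow> \<bar>S u - S (pt k)\<bar> < \<delta>))
     \<or> (pt k < pt (Suc k) \<and> pt (Suc k) \<le> T \<and> \<bar>S (pt (Suc k)) - S (pt k)\<bar> = \<delta>
         \<and> (\<forall>u. pt k \<le> u \<and> u < pt (Suc k) \<longrightarrow> \<bar>S u - S (pt k)\<bar> < \<delta>))"
proof -
  have h: "0 \<le> pt k" "pt k \<le> T" "on_grid \<delta> (S (pt k))" using pt_cases[of k] assms T0 by auto
  from step[OF h] show ?thesis by (auto simp add: leb_pt.simps(2) Let_def)
qed

lemma pt_Suc_le: "pt k \<le> pt (Suc k)"
proof (cases "pt k \<le> T")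
  case True thus ?thesis using pt_next[OF True] T0 by auto
next
  case False
  hence "pt k = T + 1" using pt_cases[of k] by auto
  moreover have "{t. T + 1 \<le> t \<and> t \<le> T \<and> on_grid \<delta> (S t) \<and> S t \<noteq> S (T+1)} = {}" by auto
  ultimately show ?thesis by (simp add: leb_pt.simps(2) Let_def)
qed

lemma pt_mono: "j \<le> k \<Longrightarrow> pt j \<le> pt k"
  using pt_Suc_le by (rule lift_Suc_mono_le)

lemma pt_strict: assumes "j < k" "pt k \<le> T" shows "pt j < pt k"
proof -
  have "pt (Suc j) \<le> pt k" using pt_mono assms by auto
  moreover have "pt j \<le> T" using pt_mono[of j k] assms by auto
  ultimately show ?thesis using pt_next[of j] assms by auto
qed

lemma pt_nonneg: "0 \<le> pt k"
  using pt_mono[of 0 k] by simp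

lemma pt_grid: "pt k \<le> T \<Longrightarrow> on_grid \<delta> (S (pt k))"
  using pt_cases[of k] T0 by auto

lemma pt_in:
  assumes "pt k \<le> u" "u \<le> T" "u < pt (Suc k)" "on_grid \<delta> (S u)"
  shows "S u = S (pt k)"
proof -
  have k: "pt k \<le> T" using assms by auto
  have "\<bar>S u - S (pt k)\<bar> < \<delta>" using pt_next[OF k] assms by auto
  thus ?thesis using grid_eq[OF d0 assms(4) pt_grid[OF k]] by auto
qed

lemma pt_exceeds: "\<exists>K. pt K > T"
proof -
  have "uniformly_continuous_on {0..T} S" using cont by (rule compact_uniformly_continuous) auto
  then obtain \<eta> where \<eta>: "\<eta> > 0" "\<And>x x'. x \<in> {0..T} \<Longrightarrow> x' \<in> {0..T} \<Longrightarrow> dist x' x < \<eta> \<Longrightarrow> dist (S x') (S x) < \<delta>"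
    unfolding uniformly_continuous_on_def using d0 by metis
  have gap: "pt (Suc k) - pt k \<ge> \<eta>" if "pt (Suc k) \<le> T" for k
  proof (rule ccontr)
    assume "\<not> ?thesis"
    hence "dist (pt (Suc k)) (pt k) < \<eta>" using pt_Suc_le[of k] by (simp add: dist_real_def)
    hence "dist (S (pt (Suc k))) (S (pt k)) < \<delta>" using \<eta>(2)[of "pt k" "pt (Suc k)"] that pt_nonneg pt_Suc_le[of k] by auto
    moreover have "pt k \<le> T" using that pt_Suc_le[of k] by auto
    ultimately show False using pt_next[of k] that T0 by (auto simp: dist_real_def)
  qed
  have lin: "pt k \<ge> real k * \<eta>" if "pt k \<le> T" for k
    using that
  proof (induction k)
    case 0 thus ?case by simp
  next
    case (Suc k)
    have "pt k \<le> T" using Suc.prems pt_Suc_le[of k] by auto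
    thus ?case using Suc.IH gap[OF Suc.prems] by (simp add: algebra_simps)
  qed
  obtain K :: nat where "T / \<eta> < K" using reals_Archimedean2 by blast
  hence "T < real K * \<eta>" using \<eta>(1) by (simp add: field_simps)
  hence "pt K > T" using lin[of K] by force
  thus ?thesis by blast
qed

lemma pt_locate:
  assumes "0 \<le> u" "u \<le> T"
  shows "\<exists>k. pt k \<le> u \<and> u < pt (Suc k)"
proof -
  obtain K where K: "pt K > T" using pt_exceeds by blast
  define m where "m = (LEAST m. u < pt m)"
  have um: "u < pt m" unfolding m_def by (rule LeastI[where k=K]) (use K assms in auto)
  have "m \<noteq> 0" using um assms by (cases m) auto
  then obtain k where mk: "m = Suc k" using not0_implies_Suc by blast
  have "\<not> u < pt k" using not_less_Least[of k "\<lambda>m. u < pt m"] mk unfolding m_def by auto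
  thus ?thesis using um mk by (auto simp: not_less)
qed

abbreviation th where "th i \<equiv> snd (exc S T \<delta> i)"
abbreviation ta where "ta i \<equiv> fst (exc S T \<delta> i)"

lemma exc_Suc: "ta (Suc i) = hit T (\<lambda>u. S u = \<delta>) (th i)" "th (Suc i) = hit T (\<lambda>u. S u = 0) (ta (Suc i))"
  by (simp_all add: exc.simps(2) Let_def)

lemma hit_attain:
  assumes "0 \<le> a" "S a \<noteq> v" "hit T (\<lambda>u. S u = v) a \<le> T"
  shows "a < hit T (\<lambda>u. S u = v) a \<and> S (hit T (\<lambda>u. S u = v) a) = v"
proof -
  define A where "A = {u. a < u \<and> u \<le> T \<and> S u = v}"
  have ne: "A \<noteq> {}"
  proof
    assume "A = {}" thus False using assms(3) unfolding hit_def Let_def A_def by auto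
  qed
  have h: "hit T (\<lambda>u. S u = v) a = Inf A" using ne unfolding hit_def Let_def A_def by auto
  have aT: "a \<le> T" using ne unfolding A_def by auto
  have A2: "A = {x \<in> {a..T}. S x = v}" unfolding A_def using assms(2) by (auto simp: order.order_iff_strict)
  have "continuous_on {a..T} S" using assms(1) by (intro continuous_on_subset[OF cont]) auto
  hence "closed A" unfolding A2 by (intro continuous_closed_preimage_constant) auto
  hence "Inf A \<in> A" using ne by (intro closed_contains_Inf) (auto simp: A_def intro: bdd_belowI[of _ a])
  thus ?thesis unfolding h A_def by auto
qed

lemma th_cases: "th i = T + 1 \<or> (0 \<le> th i \<and> th i \<le> T \<and> S (th i) = 0)"
proof (induction i)
  case 0 thus ?case using S0 T0 by simp
next
  case (Suc i)
  show ?case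
  proof (cases "ta (Suc i) \<le> T")
    case False
    hence "th (Suc i) = T + 1" unfolding exc_Suc(2) by (intro hit_ge) auto
    thus ?thesis by blast
  next
    case True
    have "th i \<noteq> T + 1"
    proof
      assume "th i = T + 1"
      hence "ta (Suc i) = T + 1" unfolding exc_Suc(1) by (intro hit_ge) auto
      thus False using True by auto
    qed
    hence thi: "0 \<le> th i" "th i \<le> T" "S (th i) = 0" using Suc by auto
    have ta: "th i < ta (Suc i)" "S (ta (Suc i)) = \<delta>"
      using hit_attain[of "th i" \<delta>] thi True d0 unfolding exc_Suc(1) by auto
    show ?thesis
    proof (cases "th (Suc i) \<le> T")
      case False
      thus ?thesis using hit_cases[of T "\<lambda>u. S u = 0" "ta (Suc i)"] unfolding exc_Suc(2) by auto
    next
      case True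
      have "ta (Suc i) < th (Suc i) \<and> S (th (Suc i)) = 0"
        using hit_attain[of "ta (Suc i)" 0] ta thi True d0 unfolding exc_Suc(2) by auto
      thus ?thesis using True ta thi by auto
    qed
  qed
qed

lemma exc_step:
  assumes "th (Suc i) \<le> T"
  shows "th i \<le> T \<and> S (th i) = 0 \<and> 0 \<le> th i \<and> th i < ta (Suc i) \<and> ta (Suc i) < th (Suc i)
     \<and> S (ta (Suc i)) = \<delta> \<and> S (th (Suc i)) = 0"
proof -
  have taT: "ta (Suc i) \<le> T"
  proof (rule ccontr)
    assume "\<not> ?thesis"
    hence "th (Suc i) = T + 1" unfolding exc_Suc(2) by (intro hit_ge) auto
    thus False using assms by auto
  qed
  have "th i \<noteq> T + 1"
  proof
    assume "th i = T + 1"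
    hence "ta (Suc i) = T + 1" unfolding exc_Suc(1) by (intro hit_ge) auto
    thus False using taT by auto
  qed
  hence thi: "0 \<le> th i" "th i \<le> T" "S (th i) = 0" using th_cases[of i] by auto
  have ta: "th i < ta (Suc i)" "S (ta (Suc i)) = \<delta>"
    using hit_attain[of "th i" \<delta>] thi taT d0 unfolding exc_Suc(1) by auto
  have "ta (Suc i) < th (Suc i) \<and> S (th (Suc i)) = 0"
    using hit_attain[of "ta (Suc i)" 0] ta thi assms d0 unfolding exc_Suc(2) by auto
  thus ?thesis using ta thi by auto
qed

lemma th_mono: "i \<le> i' \<Longrightarrow> th i' \<le> T \<Longrightarrow> th i \<le> th i'"
proof (induction i')
  case 0 thus ?case by simp
next
  case (Suc i')
  show ?case
  proof (cases "i = Suc i'")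
    case True thus ?thesis by simp
  next
    case False
    hence "i \<le> i'" using Suc.prems by auto
    moreover have "th i' \<le> T" "th i' < th (Suc i')" using exc_step[OF Suc.prems(2)] by auto
    ultimately show ?thesis using Suc.IH by force
  qed
qed

end


context lp begin

definition UU where "UU t = {j. S (pt j) = 0 \<and> S (pt (Suc j)) = \<delta> \<and> pt (Suc j) \<le> t}"
definition EE where "EE t = {i. 1 \<le> i \<and> th i \<le> t}"

lemma UU_sub: assumes "t \<le> T" "pt K > T" shows "UU t \<subseteq> {..<K}"
proof
  fix j assume j: "j \<in> UU t"
  show "j \<in> {..<K}"
  proof (rule ccontr)
    assume "j \<notin> {..<K}"
    hence "pt K \<le> pt (Suc j)" by (intro pt_mono) auto
    thus False using j assms unfolding UU_def by auto
  qed
qed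

lemma UU_fin: "t \<le> T \<Longrightarrow> finite (UU t)"
  using pt_exceeds UU_sub by (meson finite_lessThan finite_subset)

lemma th0: "th 0 = 0" by simp

lemma exist_up:
  assumes "i \<in> EE t" "t \<le> T"
  shows "\<exists>j\<in>UU t. th (i - 1) < pt (Suc j) \<and> pt (Suc j) \<le> ta i"
proof -
  obtain i0 where i0: "i = Suc i0" using assms(1) unfolding EE_def by (cases i) auto
  have thT: "th (Suc i0) \<le> t" using assms(1) i0 unfolding EE_def by auto
  note es = exc_step[of i0] 
  have F: "th i0 \<le> T" "S (th i0) = 0" "0 \<le> th i0" "th i0 < ta (Suc i0)" "ta (Suc i0) < th (Suc i0)"
     "S (ta (Suc i0)) = \<delta>" using es thT assms(2) by auto
  obtain k where k: "pt k \<le> th i0" "th i0 < pt (Suc k)" using pt_locate[OF F(3) F(1)] by blast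
  have Sk: "S (pt k) = 0" using pt_in[OF k(1) F(1) k(2)] F(2) by simp
  have taT: "ta (Suc i0) \<le> T" "0 \<le> ta (Suc i0)" using F thT assms(2) by auto
  obtain k' where k': "pt k' \<le> ta (Suc i0)" "ta (Suc i0) < pt (Suc k')" using pt_locate[OF taT(2) taT(1)] by blast
  have Sk': "S (pt k') = \<delta>" using pt_in[OF k'(1) taT(1) k'(2)] F(6) by simp
  have kk: "k < k'"
  proof (rule ccontr)
    assume "\<not> k < k'"
    hence "k' = k \<or> k' < k" by auto
    thus False
    proof
      assume "k' = k" thus False using Sk Sk' d0 by simp
    next
      assume "k' < k"
      hence "pt (Suc k') \<le> pt k" by (intro pt_mono) auto
      thus False using k k' F by auto
    qed
  qed
  define m where "m = (LEAST m. k < m \<and> \<delta> \<le> S (pt m))"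
  have m1: "k < m \<and> \<delta> \<le> S (pt m)" unfolding m_def by (rule LeastI[where k=k']) (use kk Sk' in auto)
  have m2: "m \<le> k'" unfolding m_def by (rule Least_le) (use kk Sk' in auto)
  obtain j where j: "m = Suc j" using m1 by (cases m) auto
  have Sj: "S (pt j) < \<delta>"
  proof (cases "j = k")
    case True thus ?thesis using Sk d0 by simp
  next
    case False
    hence "k < j" using m1 j by auto
    moreover have "\<not> (k < j \<and> \<delta> \<le> S (pt j))" using not_less_Least[of j "\<lambda>m. k < m \<and> \<delta> \<le> S (pt m)"] j unfolding m_def by auto
    ultimately show ?thesis by auto
  qed
  have pmT: "pt m \<le> ta (Suc i0)" using pt_mono[OF m2] k' by auto
  have pjT: "pt j \<le> T" using pt_mono[of j m] j pmT taT by auto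
  have nx: "\<bar>S (pt (Suc j)) - S (pt j)\<bar> = \<delta>" using pt_next[OF pjT] pmT taT j by auto
  have "S (pt j) \<ge> 0" using nx m1 j by auto
  hence Sj0: "S (pt j) = 0" using grid_eq[OF d0 pt_grid[OF pjT] grid_0] Sj by auto
  hence Sm: "S (pt m) = \<delta>" using nx m1 j by auto
  have "j \<in> UU t" unfolding UU_def using Sj0 Sm j pmT F thT by auto
  moreover have "th i0 < pt (Suc j)" using k(2) pt_mono[of "Suc k" "Suc j"] m1 j by auto
  ultimately show ?thesis using pmT j i0 by auto
qed

lemma E_le_U:
  assumes "0 \<le> t" "t \<le> T"
  shows "finite (EE t) \<and> card (EE t) \<le> card (UU t)"
proof -
  obtain f where f: "\<And>i. i \<in> EE t \<Longrightarrow> f i \<in> UU t \<and> th (i - 1) < pt (Suc (f i)) \<and> pt (Suc (f i)) \<le> ta i"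
    using exist_up[OF _ assms(2)] by metis
  have inj: "inj_on f (EE t)"
  proof (rule linorder_inj_onI')
    fix i i' assume ii: "i \<in> EE t" "i' \<in> EE t" "i < i'"
    obtain i0 where i0: "i = Suc i0" using ii(1) unfolding EE_def by (cases i) auto
    have "th i' \<le> T" using ii(2) assms unfolding EE_def by auto
    hence a1: "ta i < th i" using exc_step[of i0] i0 th_mono[of i i'] ii by auto
    obtain i1 where i1: "i' = Suc i1" using ii(2) unfolding EE_def by (cases i') auto
    have thi1: "th i' \<le> T" using ii(2) assms unfolding EE_def by auto
    have "th i1 \<le> T" using exc_step[of i1] i1 thi1 by auto
    hence "th i \<le> th i1" using th_mono[of i i1] ii i1 by auto
    hence "pt (Suc (f i)) < pt (Suc (f i'))" using f[OF ii(1)] f[OF ii(2)] a1 i1 by force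
    thus "f i \<noteq> f i'" by auto
  qed
  have im: "f ` EE t \<subseteq> UU t" using f by auto
  show ?thesis using inj_on_finite[OF inj im UU_fin[OF assms(2)]] card_inj_on_le[OF inj im UU_fin[OF assms(2)]] by auto
qed

lemma U_le_E:
  assumes "0 \<le> t" "t \<le> T"
  shows "card (UU t) \<le> card (EE t) + 1"
proof -
  have finE: "finite (EE t)" using E_le_U[OF assms] by auto
  define F where "F j = card {i. 1 \<le> i \<and> th i \<le> pt j}" for j
  have sub: "{i. 1 \<le> i \<and> th i \<le> pt j} \<subseteq> EE t" if "j \<in> UU t" for j
  proof -
    have "pt j \<le> pt (Suc j)" by (rule pt_Suc_le)
    thus ?thesis using that unfolding UU_def EE_def by auto
  qed
  have strict: "F j < F j'" if jj: "j \<in> UU t" "j' \<in> UU t" "j < j'" for j j'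
  proof -
    obtain n where n: "EE t \<subseteq> {..<n}" using finE by (auto simp: finite_nat_set_iff_bounded)
    have "Suc n \<notin> EE t" using n by auto
    hence ex: "1 \<le> Suc n \<and> pt j < th (Suc n)"
      using jj(1) pt_Suc_le[of j] unfolding EE_def UU_def by auto
    define i where "i = (LEAST i. 1 \<le> i \<and> pt j < th i)"
    have i1: "1 \<le> i \<and> pt j < th i" unfolding i_def by (rule LeastI[where k="Suc n"]) (use ex in auto)
    obtain i0 where i0: "i = Suc i0" using i1 by (cases i) auto
    have thi0: "th i0 \<le> pt j"
    proof (cases i0)
      case 0 thus ?thesis using pt_nonneg by simp
    next
      case (Suc i2)
      hence "\<not> (1 \<le> i0 \<and> pt j < th i0)" using not_less_Least[of i0 "\<lambda>i. 1 \<le> i \<and> pt j < th i"] i0 unfolding i_def by auto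
      thus ?thesis using Suc by auto
    qed
    have U1: "S (pt j) = 0" "S (pt (Suc j)) = \<delta>" "pt (Suc j) \<le> t" using jj(1) unfolding UU_def by auto
    have U2: "S (pt j') = 0" "S (pt (Suc j')) = \<delta>" "pt (Suc j') \<le> t" using jj(2) unfolding UU_def by auto
    have pj'T: "pt j' \<le> T" using U2 assms pt_Suc_le[of j'] by auto
    have "pt j < pt (Suc j)" using pt_strict[of j "Suc j"] U1 assms by auto
    hence "ta (Suc i0) \<le> pt (Suc j)" unfolding exc_Suc(1) using thi0 U1 assms by (intro hit_le) auto
    moreover have "Suc j \<noteq> j'" using U1 U2 d0 by auto
    hence "pt (Suc j) < pt j'" using jj pj'T by (intro pt_strict) auto
    ultimately have "th (Suc i0) \<le> pt j'" unfolding exc_Suc(2) using U2 pj'T by (intro hit_le) auto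
    hence inn: "i \<in> {i. 1 \<le> i \<and> th i \<le> pt j'}" "i \<notin> {i. 1 \<le> i \<and> th i \<le> pt j}" using i0 i1 by auto
    have "{i. 1 \<le> i \<and> th i \<le> pt j} \<subseteq> {i. 1 \<le> i \<and> th i \<le> pt j'}" using pt_mono[of j j'] jj by auto
    hence "{i. 1 \<le> i \<and> th i \<le> pt j} < {i. 1 \<le> i \<and> th i \<le> pt j'}" using inn by blast
    moreover have "finite {i. 1 \<le> i \<and> th i \<le> pt j'}" using sub[OF jj(2)] finE by (rule finite_subset)
    ultimately show ?thesis unfolding F_def by (intro psubset_card_mono) auto
  qed
  have inj: "inj_on F (UU t)" by (rule linorder_inj_onI') (use strict in force)
  have im: "F ` UU t \<subseteq> {..card (EE t)}"
    using sub finE unfolding F_def by (auto intro!: card_mono)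
  show ?thesis using card_inj_on_le[OF inj im] by simp
qed

end


context lp begin

lemma rpow_d: "p \<ge> 1 \<Longrightarrow> rpow \<delta> (p - 1) = \<delta> powr (p - 1)"
  using d0 unfolding rpow_def by auto

lemma rpow_nn: "rpow y e \<ge> 0" unfolding rpow_def by auto

lemma disc_bounds:
  assumes t: "0 \<le> t" "t \<le> T" and p: "p \<ge> 1"
  shows "\<delta> powr (p - 1) * card (UU t) \<le> disc_lt S T \<delta> p t 0"
    and "p > 1 \<Longrightarrow> disc_lt S T \<delta> p t 0 \<le> \<delta> powr (p - 1) * (card (UU t) + 1)"
proof -
  define e where "e = \<delta> powr (p - 1)"
  define g where "g j = indicator (oint (S (min (pt j) t)) (S (min (pt (Suc j)) t))) (0::real)
          * rpow \<bar>S (min (pt (Suc j)) t) - 0\<bar> (p - 1)" for j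
  have D: "disc_lt S T \<delta> p t 0 = suminf g" unfolding disc_lt_def g_def by simp
  obtain K where K: "pt K > T" using pt_exceeds by blast
  have gz: "g n = 0" if "n \<notin> {..<K}" for n
  proof -
    have "pt K \<le> pt n" "pt K \<le> pt (Suc n)" using that by (auto intro!: pt_mono)
    hence "min (pt n) t = t" "min (pt (Suc n)) t = t" using K t by auto
    thus ?thesis unfolding g_def oint_def by simp
  qed
  have D2: "disc_lt S T \<delta> p t 0 = sum g {..<K}" unfolding D by (rule suminf_finite) (use gz in auto)
  have Usub: "UU t \<subseteq> {..<K}" using UU_sub[OF t(2) K] .
  have g0: "g j \<ge> 0" for j unfolding g_def by (intro mult_nonneg_nonneg rpow_nn) (simp add: indicator_def)
  have gU: "g j = e" if "j \<in> UU t" for j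
  proof -
    have U: "S (pt j) = 0" "S (pt (Suc j)) = \<delta>" "pt (Suc j) \<le> t" using that unfolding UU_def by auto
    have "pt j < pt (Suc j)" using pt_strict[of j "Suc j"] U t by auto
    hence "min (pt j) t = pt j" "min (pt (Suc j)) t = pt (Suc j)" using U by auto
    thus ?thesis unfolding g_def oint_def e_def using U d0 rpow_d[OF p] by simp
  qed
  have split: "sum g {..<K} = sum g (UU t) + sum g ({..<K} - UU t)"
    using Usub by (simp add: sum.subset_diff)
  have sU: "sum g (UU t) = e * card (UU t)" using gU by simp
  have "sum g ({..<K} - UU t) \<ge> 0" using g0 by (simp add: sum_nonneg)
  thus "\<delta> powr (p - 1) * card (UU t) \<le> disc_lt S T \<delta> p t 0" using D2 split sU e_def by simp
  assume p1: "p > 1"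
  have rp: "rpow y (p - 1) = y powr (p - 1)" for y using p1 unfolding rpow_def by auto
  have gB: "pt j \<le> t \<and> t < pt (Suc j) \<and> g j \<le> e" if "j \<notin> UU t" "g j \<noteq> 0" for j
  proof -
    have "\<not> t < pt j"
    proof
      assume "t < pt j"
      moreover have "pt j \<le> pt (Suc j)" by (rule pt_Suc_le)
      ultimately have "min (pt j) t = t" "min (pt (Suc j)) t = t" by auto
      thus False using that unfolding g_def oint_def by simp
    qed
    hence j1: "pt j \<le> t" by simp
    have jT: "pt j \<le> T" using j1 t by auto
    have gj: "on_grid \<delta> (S (pt j))" using pt_grid[OF jT] .
    have "\<not> pt (Suc j) \<le> t"
    proof
      assume a: "pt (Suc j) \<le> t"
      hence nx: "\<bar>S (pt (Suc j)) - S (pt j)\<bar> = \<delta>" "pt j < pt (Suc j)" using pt_next[OF jT] t by auto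
      have gj': "on_grid \<delta> (S (pt (Suc j)))" using pt_grid a t by auto
      have mm: "min (pt j) t = pt j" "min (pt (Suc j)) t = pt (Suc j)" using a nx j1 by auto
      have ind: "0 \<in> oint (S (pt j)) (S (pt (Suc j)))"
      proof (rule ccontr)
        assume "0 \<notin> oint (S (pt j)) (S (pt (Suc j)))"
        thus False using that(2) unfolding g_def mm by simp
      qed
      show False
      proof (cases "S (pt j) \<le> S (pt (Suc j))")
        case True
        hence c: "S (pt j) \<le> 0" "0 < S (pt (Suc j))" "S (pt (Suc j)) = S (pt j) + \<delta>"
          using ind nx unfolding oint_def by auto
        have "S (pt j) = 0" using grid_eq[OF d0 gj grid_0] c by auto
        hence "j \<in> UU t" using c a unfolding UU_def by auto
        thus False using that by auto
      next
        case False
        hence c: "S (pt (Suc j)) \<le> 0" "0 < S (pt j)" "S (pt j) = S (pt (Suc j)) + \<delta>"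
          using ind nx unfolding oint_def by auto
        have "S (pt (Suc j)) = 0" using grid_eq[OF d0 gj' grid_0] c by auto
        hence "g j = 0" unfolding g_def mm using rp p1 by simp
        thus False using that by auto
      qed
    qed
    hence j2: "t < pt (Suc j)" by simp
    have mm: "min (pt j) t = pt j" "min (pt (Suc j)) t = t" using j1 j2 by auto
    have close: "\<bar>S t - S (pt j)\<bar> < \<delta>" using pt_next[OF jT] t j1 j2 by auto
    have ind: "0 \<in> oint (S (pt j)) (S t)"
    proof (rule ccontr)
      assume "0 \<notin> oint (S (pt j)) (S t)"
      thus False using that(2) unfolding g_def mm by simp
    qed
    have "S (pt j) \<le> S t"
    proof (rule ccontr)
      assume "\<not> ?thesis"
      hence "S t \<le> 0" "0 < S (pt j)" using ind unfolding oint_def by auto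
      hence "S (pt j) = 0" using grid_eq[OF d0 gj grid_0] close by auto
      thus False using \<open>0 < S (pt j)\<close> by simp
    qed
    hence c: "S (pt j) \<le> 0" "0 < S t" using ind unfolding oint_def by auto
    hence "S (pt j) = 0" using grid_eq[OF d0 gj grid_0] close by auto
    hence st: "\<bar>S t\<bar> \<le> \<delta>" using close c by auto
    have "rpow \<bar>S t - 0\<bar> (p - 1) \<le> e" unfolding rp e_def using st p1 by (auto intro!: powr_mono2)
    moreover have "indicator (oint (S (pt j)) (S t)) (0::real) \<le> (1::real)" by (simp add: indicator_def)
    ultimately have "g j \<le> e" unfolding g_def mm using rpow_nn[of "\<bar>S t - 0\<bar>" "p - 1"]
      by (metis (no_types, lifting) ind indicator_simps(1) mult_1)
    thus ?thesis using j1 j2 by auto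
  qed
  define Z where "Z = {j \<in> {..<K} - UU t. g j \<noteq> 0}"
  have fZ: "finite Z" unfolding Z_def by auto
  have sZ: "sum g ({..<K} - UU t) = sum g Z"
    unfolding Z_def by (rule sum.mono_neutral_right) auto
  have cZ: "card Z \<le> 1"
  proof -
    have "\<forall>a1\<in>Z. \<forall>a2\<in>Z. a1 = a2"
    proof (intro ballI)
      fix a1 a2 assume a: "a1 \<in> Z" "a2 \<in> Z"
      have b1: "pt a1 \<le> t" "t < pt (Suc a1)" using gB a(1) unfolding Z_def by auto
      have b2: "pt a2 \<le> t" "t < pt (Suc a2)" using gB a(2) unfolding Z_def by auto
      show "a1 = a2"
      proof (rule ccontr)
        assume "a1 \<noteq> a2"
        hence "Suc a1 \<le> a2 \<or> Suc a2 \<le> a1" by auto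
        thus False using pt_mono b1 b2 by force
      qed
    qed
    thus ?thesis using card_le_Suc0_iff_eq[OF fZ] by simp
  qed
  have "sum g Z \<le> of_nat (card Z) * e" using gB unfolding Z_def by (intro sum_bounded_above) auto
  also have "\<dots> \<le> 1 * e"
  proof (rule mult_right_mono)
    show "real (card Z) \<le> 1" using cZ by simp
    show "0 \<le> e" unfolding e_def by simp
  qed
  also have "\<dots> = e" by simp
  finally show "disc_lt S T \<delta> p t 0 \<le> \<delta> powr (p - 1) * (card (UU t) + 1)"
    using D2 split sU sZ e_def by (simp add: algebra_simps)
qed

end


context lp begin
lemma main_bounds:
  assumes t: "0 \<le> t" "t \<le> T" and p: "p \<ge> 1"
  shows "\<delta> powr (p - 1) * real (num_exc S T \<delta> t) \<le> disc_lt S T \<delta> p t 0"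
    and "p > 1 \<Longrightarrow> disc_lt S T \<delta> p t 0 \<le> \<delta> powr (p - 1) * (real (num_exc S T \<delta> t) + 2)"
proof -
  have ne: "num_exc S T \<delta> t = card (EE t)" unfolding num_exc_def EE_def by simp
  have c1: "card (EE t) \<le> card (UU t)" "card (UU t) \<le> card (EE t) + 1"
    using E_le_U[OF t] U_le_E[OF t] by auto
  have e0: "\<delta> powr (p - 1) \<ge> 0" by simp
  have "\<delta> powr (p - 1) * real (card (EE t)) \<le> \<delta> powr (p - 1) * real (card (UU t))"
    using c1 e0 by (intro mult_left_mono) auto
  thus "\<delta> powr (p - 1) * real (num_exc S T \<delta> t) \<le> disc_lt S T \<delta> p t 0"
    unfolding ne using disc_bounds(1)[OF t p] by linarith
  assume p1: "p > 1"
  have "\<delta> powr (p - 1) * (real (card (UU t)) + 1) \<le> \<delta> powr (p - 1) * (real (card (EE t)) + 2)"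
    using c1 e0 by (intro mult_left_mono) auto
  thus "disc_lt S T \<delta> p t 0 \<le> \<delta> powr (p - 1) * (real (num_exc S T \<delta> t) + 2)"
    unfolding ne using disc_bounds(2)[OF t p p1] of_nat_Suc[of "card (UU t)"] by (simp add: add.commute)
qed
end

lemma dyad_pos: "dyad n > 0" unfolding dyad_def by simp

lemma dyad_ne: "dyad n \<noteq> 0" using dyad_pos[of n] by linarith

lemma dyad_lim: "dyad \<longlonglongrightarrow> 0"
  unfolding dyad_def by (rule LIMSEQ_inverse_realpow_zero) simp

lemma dyad_powr_lim: "q > 0 \<Longrightarrow> (\<lambda>n. dyad n powr q) \<longlonglongrightarrow> 0"
  by (rule tendsto_zero_powrI[OF dyad_lim]) (auto simp: less_imp_le[OF dyad_pos])

lemma dyad_powr_top: "q < 0 \<Longrightarrow> filterlim (\<lambda>n. dyad n powr q) at_top sequentially"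
proof -
  assume q: "q < 0"
  have "filterlim (\<lambda>n. inverse (dyad n powr (- q))) at_top sequentially"
    using dyad_powr_lim[of "-q"] q dyad_pos
    by (subst filterlim_inverse_at_top_iff) (auto intro!: always_eventually simp: dyad_ne)
  thus ?thesis by (simp add: powr_minus)
qed

theorem mainTheorem6:
  fixes S :: "real \<Rightarrow> real" and T p :: real and L :: "real \<Rightarrow> real \<Rightarrow> real"
  assumes "p \<ge> 1" and "T > 0"
    and "continuous_on {0..T} S" and "S 0 = 0"
    and "uniform_limit ({0..T} \<times> UNIV)
           (\<lambda>n (t, x). disc_lt S T (dyad n) p t x) (\<lambda>(t, x). L t x) sequentially"
    and "continuous_on ({0..T} \<times> UNIV) (\<lambda>(t, x). L t x)"
    and "\<And>t. t \<in> {0<..T} \<Longrightarrow> L t 0 > 0"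
  shows "\<forall>t\<in>{0<..T}.
     (p < 2 \<longrightarrow> (\<lambda>n. dyad n * real (num_exc S T (dyad n) t)) \<longlonglongrightarrow> 0)
   \<and> (p > 2 \<longrightarrow> filterlim (\<lambda>n. dyad n * real (num_exc S T (dyad n) t)) at_top sequentially
               \<and> (\<lambda>n. real (num_exc S T (dyad n) t)) \<sim>[sequentially] (\<lambda>n. L t 0 / dyad n powr (p - 1)))
   \<and> (p = 2 \<longrightarrow> (\<lambda>n. dyad n * real (num_exc S T (dyad n) t)) \<longlonglongrightarrow> L t 0
               \<and> (\<lambda>n. real (num_exc S T (dyad n) t)) \<sim>[sequentially] (\<lambda>n. L t 0 / dyad n))"
proof
  fix t assume tt: "t \<in> {0<..T}"
  hence t: "0 \<le> t" "t \<le> T" by auto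
  define l where "l = L t 0"
  have l0: "l > 0" using assms(7)[OF tt] unfolding l_def .
  define Ln where "Ln n = disc_lt S T (dyad n) p t 0" for n
  define D where "D n = real (num_exc S T (dyad n) t)" for n
  define e where "e n = dyad n powr (p - 1)" for n
  have Llim: "Ln \<longlonglongrightarrow> l"
    using tendsto_uniform_limitI[OF assms(5), of "(t, 0)"] t unfolding Ln_def l_def by simp
  have lp: "lp S T (dyad n)" for n using assms dyad_pos by unfold_locales auto
  have B1: "e n * D n \<le> Ln n" for n
    using lp.main_bounds(1)[OF lp t assms(1)] unfolding e_def D_def Ln_def .
  have B2: "p > 1 \<Longrightarrow> Ln n \<le> e n * (D n + 2)" for n
    using lp.main_bounds(2)[OF lp t assms(1)] unfolding e_def D_def Ln_def by blast
  have D0: "D n \<ge> 0" for n unfolding D_def by simp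
  have dd: "dyad n * D n = dyad n powr (2 - p) * (e n * D n)" for n
  proof -
    have "dyad n powr (2 - p) * e n = dyad n powr ((2 - p) + (p - 1))"
      unfolding e_def by (rule powr_add[symmetric])
    also have "\<dots> = dyad n" using dyad_pos[of n] by (simp add: less_imp_le)
    finally show ?thesis by (simp add: algebra_simps)
  qed
  have eD: "p > 1 \<Longrightarrow> (\<lambda>n. e n * D n) \<longlonglongrightarrow> l"
  proof -
    assume p1: "p > 1"
    have "(\<lambda>n. Ln n - 2 * e n) \<longlonglongrightarrow> l - 2 * 0"
      unfolding e_def using p1 by (intro tendsto_intros Llim dyad_powr_lim) auto
    hence lo: "(\<lambda>n. Ln n - 2 * e n) \<longlonglongrightarrow> l" by simp
    show ?thesis
    proof (rule tendsto_sandwich[OF _ _ lo Llim])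
      show "\<forall>\<^sub>F n in sequentially. Ln n - 2 * e n \<le> e n * D n"
        using B2[OF p1] by (intro always_eventually) (auto simp: algebra_simps)
      show "\<forall>\<^sub>F n in sequentially. e n * D n \<le> Ln n" using B1 by (intro always_eventually) auto
    qed
  qed
  have equiv: "p > 1 \<Longrightarrow> D \<sim>[sequentially] (\<lambda>n. l / e n)"
  proof -
    assume p1: "p > 1"
    have "(\<lambda>n. e n * D n / l) \<longlonglongrightarrow> l / l" by (intro tendsto_intros eD p1) (use l0 in auto)
    hence "(\<lambda>n. D n / (l / e n)) \<longlonglongrightarrow> 1"
      using l0 by (simp add: field_simps)
    thus ?thesis by (rule asymp_equivI')
  qed
  have P1: "p < 2 \<longrightarrow> (\<lambda>n. dyad n * D n) \<longlonglongrightarrow> 0"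
  proof
    assume p2: "p < 2"
    have up: "(\<lambda>n. dyad n powr (2 - p) * Ln n) \<longlonglongrightarrow> 0 * l"
      using p2 by (intro tendsto_intros dyad_powr_lim Llim) auto
    show "(\<lambda>n. dyad n * D n) \<longlonglongrightarrow> 0"
    proof (rule tendsto_sandwich[OF _ _ tendsto_const])
      show "\<forall>\<^sub>F n in sequentially. 0 \<le> dyad n * D n"
        using D0 dyad_pos by (intro always_eventually allI mult_nonneg_nonneg) (auto intro: less_imp_le)
      show "\<forall>\<^sub>F n in sequentially. dyad n * D n \<le> dyad n powr (2 - p) * Ln n"
        unfolding dd using B1 by (intro always_eventually allI mult_left_mono) auto
      show "(\<lambda>n. dyad n powr (2 - p) * Ln n) \<longlonglongrightarrow> 0" using up by simp
    qed
  qed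
  have P2: "p > 2 \<longrightarrow> filterlim (\<lambda>n. dyad n * D n) at_top sequentially \<and> D \<sim>[sequentially] (\<lambda>n. l / e n)"
  proof
    assume p2: "p > 2"
    have "filterlim (\<lambda>n. (e n * D n) * dyad n powr (2 - p)) at_top sequentially"
      by (rule filterlim_tendsto_pos_mult_at_top[OF eD l0 dyad_powr_top]) (use p2 in auto)
    hence "filterlim (\<lambda>n. dyad n * D n) at_top sequentially" unfolding dd by (simp add: mult.commute)
    thus "filterlim (\<lambda>n. dyad n * D n) at_top sequentially \<and> D \<sim>[sequentially] (\<lambda>n. l / e n)"
      using equiv p2 by auto
  qed
  have P3: "p = 2 \<longrightarrow> (\<lambda>n. dyad n * D n) \<longlonglongrightarrow> l \<and> D \<sim>[sequentially] (\<lambda>n. l / dyad n)"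
  proof
    assume p2: "p = 2"
    have ee: "e n = dyad n" for n unfolding e_def p2 using dyad_pos[of n] by simp
    show "(\<lambda>n. dyad n * D n) \<longlonglongrightarrow> l \<and> D \<sim>[sequentially] (\<lambda>n. l / dyad n)"
      using eD equiv p2 unfolding ee by auto
  qed
  show "(p < 2 \<longrightarrow> (\<lambda>n. dyad n * real (num_exc S T (dyad n) t)) \<longlonglongrightarrow> 0)
   \<and> (p > 2 \<longrightarrow> filterlim (\<lambda>n. dyad n * real (num_exc S T (dyad n) t)) at_top sequentially
               \<and> (\<lambda>n. real (num_exc S T (dyad n) t)) \<sim>[sequentially] (\<lambda>n. L t 0 / dyad n powr (p - 1)))
   \<and> (p = 2 \<longrightarrow> (\<lambda>n. dyad n * real (num_exc S T (dyad n) t)) \<longlonglongrightarrow> L t 0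
               \<and> (\<lambda>n. real (num_exc S T (dyad n) t)) \<sim>[sequentially] (\<lambda>n. L t 0 / dyad n))"
    using P1 P2 P3 unfolding D_def e_def l_def by (simp add: D_def[symmetric])
qed


end
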